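(* Let $n>3$. Let $U_{2,2}$ be the irreducible $SL_n$-subrepresentation of the space of polynomial functions on $\mathfrak{sl}_n$ generated by the $2\times2$ minor $Z\mapsto Z_{1,n}Z_{2,n-1}-Z_{1,n-1}Z_{2,n}$. Then for every $f\in U_{2,2}$ and every $Z\in\overline{\mathbb{S}_{\mathrm{min}}(\mathfrak{sl}_n)}$ we have $f(Z)=0$.
   Context: $SL_n$ acts on functions on $\mathfrak{sl}_n$ via the adjoint action; the span of all $2\times2$ minors $Z_{i,j}Z_{k,l}-Z_{i,l}Z_{k,j}$ is an $SL_n$-representation isomorphic to $\wedge^2E^*\otimes\wedge^2E$ with $E=\mathbb{C}^n$, which decomposes as $V_{1,2}\oplus U_{2,2}$. The sheet closure is $$\overline{\mathbb{S}_{\mathrm{min}}(\mathfrak{sl}_n)}=\left\{R\begin{pmatrix}(n-1)Y_1 & Y_2&\cdots&Y_n\\ 0&-Y_1&&0\\ \vdots&&\ddots&\vdots\\ 0&\cdots&\cdots&-Y_1\end{pmatrix}R^{-1}\ \middle|\ Y_i\in\mathbb{C},\ R\in SL_n\right\},$$ the closure of the sheet of $\mathfrak{sl}_n$ containing the minimal nilpotent orbit. *)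

theory Defs
  imports "Jordan_Normal_Form.Determinant"
begin

(* 0-based indices: entry (i,j) here corresponds to Z_{i+1,j+1} in the paper *)

definition SL :: "nat \<Rightarrow> complex mat set" where
  "SL n = {g. g \<in> carrier_mat n n \<and> det g = 1}"

definition minor22 :: "nat \<Rightarrow> complex mat \<Rightarrow> complex" where
  "minor22 n Z = Z $$ (0, n - 1) * Z $$ (1, n - 2) - Z $$ (0, n - 2) * Z $$ (1, n - 1)"

(* the SL_n-subrepresentation generated by minor22 under (g.f)(Z) = f(g^-1 Z g):
   the linear span of the orbit {g.minor22 | g \<in> SL_n} *)
definition U22 :: "nat \<Rightarrow> (complex mat \<Rightarrow> complex) set" where
  "U22 n = {f. \<exists>(k::nat) (c::nat \<Rightarrow> complex) (g::nat \<Rightarrow> complex mat) (h::nat \<Rightarrow> complex mat).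
      (\<forall>i<k. g i \<in> SL n \<and> h i \<in> carrier_mat n n \<and> g i * h i = 1\<^sub>m n) \<and>
      f = (\<lambda>Z. \<Sum>i<k. c i * minor22 n (h i * Z * g i))}"

(* the matrix with first row ((n-1)Y_1, Y_2, ..., Y_n) and diagonal -Y_1 below;
   Y i here is Y_{i+1} in the paper *)
definition sheet_mat :: "nat \<Rightarrow> (nat \<Rightarrow> complex) \<Rightarrow> complex mat" where
  "sheet_mat n Y = mat n n (\<lambda>(i, j).
      if i = 0 \<and> j = 0 then (of_nat n - 1) * Y 0
      else if i = 0 then Y j
      else if i = j then - Y 0
      else 0)"

definition sheet_min_closure :: "nat \<Rightarrow> complex mat set" where
  "sheet_min_closure n = {R * sheet_mat n Y * S | R S Y.
      R \<in> SL n \<and> S \<in> carrier_mat n n \<and> R * S = 1\<^sub>m n}"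

end

theory Submission
  imports Defs
begin

lemma key:
  fixes A B :: "complex mat"
  assumes n: "n > 3" and A: "A \<in> carrier_mat n n" and B: "B \<in> carrier_mat n n"
    and AB: "A * B = 1\<^sub>m n"
  shows "minor22 n (A * sheet_mat n Y * B) = 0"
proof -
  define c where "c = - Y 0"
  define w where "w = (\<lambda>j. if j = 0 then of_nat n * Y 0 else Y j)"
  define E :: "complex mat" where "E = mat n 1 (\<lambda>(i,_). if i = 0 then 1 else 0)"
  define V :: "complex mat" where "V = mat 1 n (\<lambda>(_,j). w j)"
  have E: "E \<in> carrier_mat n 1" and V: "V \<in> carrier_mat 1 n" unfolding E_def V_def by auto
  have M: "sheet_mat n Y = smult_mat c (1\<^sub>m n) + E * V"
    by (rule eq_matI) (auto simp: sheet_mat_def c_def w_def E_def V_def scalar_prod_def algebra_simps)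
  have EV: "E * V \<in> carrier_mat n n" using E V by auto
  have d1: "A * (smult_mat c (1\<^sub>m n) + E * V) = A * smult_mat c (1\<^sub>m n) + A * (E * V)"
    using A EV by (intro mult_add_distrib_mat) auto
  have d2: "A * smult_mat c (1\<^sub>m n) = smult_mat c A"
    using A by (metis mult_smult_distrib one_carrier_mat right_mult_one_mat)
  have "A * sheet_mat n Y * B = A * (smult_mat c (1\<^sub>m n) + E * V) * B" using M by simp
  also have "\<dots> = (smult_mat c A + A * (E * V)) * B"
    using d1 d2 by simp
  also have "\<dots> = smult_mat c (A * B) + (A * (E * V)) * B"
  proof -
    have "(smult_mat c A + A * (E * V)) * B = smult_mat c A * B + A * (E * V) * B"
      using A B EV by (intro add_mult_distrib_mat) auto
    moreover have "smult_mat c A * B = smult_mat c (A * B)"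
      using A B by (rule mult_smult_assoc_mat)
    ultimately show ?thesis by metis
  qed
  also have "(A * (E * V)) * B = (A * E) * (V * B)"
  proof -
    have AE: "A * E \<in> carrier_mat n 1" using A E by simp
    have "A * (E * V) = A * E * V" using assoc_mult_mat[OF A E V] by simp
    then show ?thesis using assoc_mult_mat[OF AE V B] by simp
  qed
  finally have eq: "A * sheet_mat n Y * B = smult_mat c (1\<^sub>m n) + (A * E) * (V * B)"
    using AB by simp
  have AE: "A * E \<in> carrier_mat n 1" and VB: "V * B \<in> carrier_mat 1 n" using A B E V by auto
  have ent: "(A * sheet_mat n Y * B) $$ (i, j) = (A * E) $$ (i, 0) * (V * B) $$ (0, j)"
    if "i < n" "j < n" "i \<noteq> j" for i j
  proof -
    have d: "dim_row (A * E) = n" "dim_col (A * E) = 1" "dim_row (V * B) = 1" "dim_col (V * B) = n"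
      using AE VB by auto
    have "(A * E * (V * B)) $$ (i, j) = (A * E) $$ (i, 0) * (V * B) $$ (0, j)"
      using that d by (simp add: index_mult_mat scalar_prod_def row_def col_def)
    then show ?thesis using that d by (simp add: eq)
  qed
  show ?thesis unfolding minor22_def using n
    by (simp add: ent)
qed


theorem mainTheorem7:
  fixes n :: nat and f :: "complex mat \<Rightarrow> complex" and Z :: "complex mat"
  assumes "n > 3"
    and "f \<in> U22 n"
    and "Z \<in> sheet_min_closure n"
  shows "f Z = 0"
proof -
  obtain R S Y where Z: "Z = R * sheet_mat n Y * S" and R: "R \<in> SL n"
    and S: "S \<in> carrier_mat n n" and RS: "R * S = 1\<^sub>m n"
    using assms(3) unfolding sheet_min_closure_def by blast
  obtain k :: nat and c g h where gh: "\<forall>i<k. g i \<in> SL n \<and> h i \<in> carrier_mat n n \<and> g i * h i = 1\<^sub>m n"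
    and f: "f = (\<lambda>Z. \<Sum>i<k. c i * minor22 n (h i * Z * g i))"
    using assms(2) unfolding U22_def mem_Collect_eq by blast
  have Rc: "R \<in> carrier_mat n n" using R by (simp add: SL_def)
  have M: "sheet_mat n Y \<in> carrier_mat n n" by (simp add: sheet_mat_def)
  have "minor22 n (h i * Z * g i) = 0" if i: "i < k" for i
  proof -
    have g: "g i \<in> carrier_mat n n" and h: "h i \<in> carrier_mat n n" and gh1: "g i * h i = 1\<^sub>m n"
      using gh i by (auto simp: SL_def)
    have hg: "h i * g i = 1\<^sub>m n"
      using mat_mult_left_right_inverse[OF g h gh1] .
    have e1: "h i * Z * g i = (h i * R) * sheet_mat n Y * (S * g i)"
    proof -
      have hR: "h i * R \<in> carrier_mat n n" using h Rc by simp
      have hRM: "h i * R * sheet_mat n Y \<in> carrier_mat n n" using hR M by simp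
      have RM: "R * sheet_mat n Y \<in> carrier_mat n n" using Rc M by simp
      have "h i * Z = h i * (R * sheet_mat n Y) * S" unfolding Z using assoc_mult_mat[OF h RM S] by simp
      also have "h i * (R * sheet_mat n Y) = h i * R * sheet_mat n Y" using assoc_mult_mat[OF h Rc M] by simp
      finally have "h i * Z = h i * R * sheet_mat n Y * S" .
      then show ?thesis using assoc_mult_mat[OF hRM S g] by simp
    qed
    have "(h i * R) * (S * g i) = h i * (R * S) * g i"
    proof -
      have hR: "h i * R \<in> carrier_mat n n" using h Rc by simp
      have "(h i * R) * (S * g i) = h i * R * S * g i" using assoc_mult_mat[OF hR S g] by simp
      also have "h i * R * S = h i * (R * S)" using assoc_mult_mat[OF h Rc S] by simp
      finally show ?thesis .
    qed
    also have "\<dots> = 1\<^sub>m n" using RS h hg by simp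
    finally have "(h i * R) * (S * g i) = 1\<^sub>m n" .
    then show ?thesis unfolding e1
      using key[OF assms(1), of "h i * R" "S * g i"] Rc S g h by auto
  qed
  then show ?thesis unfolding f by simp
qed

end
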